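(* Let $n\geq 2$, $F$ a field of characteristic $0$, and let $R=M_n(F)$ carry the elementary $\mathbb{Z}_{n+1}$-grading induced by $(\overline 0,\overline 1,\dots,\overline{n-1})$. Then the monomial $x_1x_2\cdots x_n$ with $\deg x_i=\overline 1$ for all $i$ is a graded identity of $R$, while $R$ satisfies no graded monomial identity of length less than $n$. In particular, this monomial identity of length $n$ does not follow from graded monomial identities of smaller length, so the bound $n$ in the statement "every graded monomial identity of an elementary grading on $M_n(F)$ follows from those of length at most $n$" cannot be improved.
   Context: The elementary $G$-grading on $M_n(F)$ induced by $(g_1,\dots,g_n)\in G^n$ (here $G=\mathbb{Z}_{n+1}$, written additively) is $R_g=\mathrm{span}\{e_{pq}: g_q-g_p=g\}$. A graded monomial $x_1\cdots x_k$ (variables with prescribed degrees in $G$) is a graded identity if it vanishes whenever each $x_i$ is replaced by an element of $R_{\deg x_i}$; its length is $k$. *)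

theory Defs
  imports "Jordan_Normal_Form.Matrix"
begin

text \<open>Elementary grading on M_n(F) by the cyclic group Z_m (written as integers
  modulo m), induced by the tuple gs 0, ..., gs (n-1) (indices are 0-based).\<close>

definition elem_component ::
  "'a::field itself \<Rightarrow> nat \<Rightarrow> (nat \<Rightarrow> int) \<Rightarrow> nat \<Rightarrow> int \<Rightarrow> 'a mat set" where
  "elem_component _ m gs n d =
     {A \<in> carrier_mat n n. \<forall>p<n. \<forall>q<n.
        A $$ (p, q) \<noteq> 0 \<longrightarrow> (gs q - gs p) mod int m = d mod int m}"

text \<open>A graded monomial x_1 ... x_k, with deg x_i = ds ! i (in Z_m), is a graded
  identity if every substitution of homogeneous elements of the prescribed
  degrees gives the zero matrix.\<close>

definition graded_monomial_identity ::
  "'a::field itself \<Rightarrow> nat \<Rightarrow> (nat \<Rightarrow> int) \<Rightarrow> nat \<Rightarrow> int list \<Rightarrow> bool" where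
  "graded_monomial_identity T m gs n ds \<longleftrightarrow>
     (\<forall>As :: 'a mat list. length As = length ds \<longrightarrow>
        (\<forall>i<length ds. As ! i \<in> elem_component T m gs n (ds ! i)) \<longrightarrow>
        foldr (\<lambda>A B. A * B) As (1\<^sub>m n) = 0\<^sub>m n n)"

end

theory Submission
  imports Defs
begin

lemma mult_entry: "A \<in> carrier_mat n n \<Longrightarrow> B \<in> carrier_mat n n \<Longrightarrow> i < n \<Longrightarrow> j < n \<Longrightarrow>
  (A * B) $$ (i,j) = (\<Sum>r\<in>{0..<n}. A $$ (i,r) * B $$ (r,j))"
  by (auto simp: scalar_prod_def intro!: sum.cong)

lemma superdiag:
  assumes "\<forall>A\<in>set As. A \<in> carrier_mat n n \<and> (\<forall>p<n. \<forall>q<n. A $$ (p,q) \<noteq> (0::'a::field) \<longrightarrow> q = p + 1)"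
  shows "foldr (\<lambda>A B. A * B) As (1\<^sub>m n) \<in> carrier_mat n n \<and>
    (\<forall>p<n. \<forall>q<n. foldr (\<lambda>A B. A * B) As (1\<^sub>m n) $$ (p,q) \<noteq> 0 \<longrightarrow> q = p + length As)"
  using assms
proof (induction As)
  case Nil
  then show ?case by auto
next
  case (Cons A As)
  define M where "M = foldr (\<lambda>A B. A * B) As (1\<^sub>m n)"
  have M: "M \<in> carrier_mat n n" "\<forall>p<n. \<forall>q<n. M $$ (p,q) \<noteq> 0 \<longrightarrow> q = p + length As"
    using Cons unfolding M_def by auto
  have A: "A \<in> carrier_mat n n" "\<forall>p<n. \<forall>q<n. A $$ (p,q) \<noteq> 0 \<longrightarrow> q = p + 1"
    using Cons.prems by auto
  have "q = p + length (A # As)" if pq: "p < n" "q < n" "(A * M) $$ (p,q) \<noteq> 0" for p q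
  proof -
    have "(\<Sum>r\<in>{0..<n}. A $$ (p,r) * M $$ (r,q)) \<noteq> 0" using pq mult_entry[OF A(1) M(1)] by simp
    then obtain r where r: "r < n" "A $$ (p,r) * M $$ (r,q) \<noteq> 0"
      by (metis (no_types, lifting) atLeastLessThan_iff sum.neutral)
    then have "r = p + 1" "q = r + length As" using A(2) M(2) pq by auto
    then show ?thesis by simp
  qed
  then have P: "\<forall>p<n. \<forall>q<n. (A * M) $$ (p,q) \<noteq> 0 \<longrightarrow> q = p + length (A # As)" by blast
  have e: "foldr (\<lambda>A B. A * B) (A # As) (1\<^sub>m n) = A * M" by (simp add: M_def)
  have c: "A * M \<in> carrier_mat n n" using A(1) M(1) by (metis mult_carrier_mat)
  show ?case unfolding e using P c by blast
qed

lemma deg1: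
  assumes "A \<in> elem_component TYPE('a::field) (n + 1) (\<lambda>i. int i) n 1" "n \<ge> 2"
  shows "A \<in> carrier_mat n n \<and> (\<forall>p<n. \<forall>q<n. A $$ (p,q) \<noteq> 0 \<longrightarrow> q = p + 1)"
proof -
  have "q = p + 1" if h: "p < n" "q < n" "(int q - int p) mod int (n+1) = 1 mod int (n+1)" for p q
  proof -
    have m: "1 mod int (n+1) = 1" using assms(2) by simp
    define t where "t = (int q - int p) div int (n+1)"
    have t: "int q - int p = 1 + int (n+1) * t"
      using h(3) m unfolding t_def by (metis mod_div_mult_eq add.commute mult.commute)
    have "t = 0"
    proof (rule ccontr)
      assume "t \<noteq> 0"
      then have "t \<ge> 1 \<or> t \<le> -1" by linarith
      then show False
      proof
        assume "t \<ge> 1" then have "int (n+1) * t \<ge> int (n+1)" by simp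
        then show False using t h by linarith
      next
        assume "t \<le> -1" then have "int (n+1) * t \<le> - int (n+1)"
          by (metis mult.commute mult_minus1 mult_right_mono of_nat_0_le_iff)
        then show False using t h by linarith
      qed
    qed
    then show ?thesis using t by simp
  qed
  moreover have "A \<in> carrier_mat n n" "\<forall>p<n. \<forall>q<n. A $$ (p,q) \<noteq> 0 \<longrightarrow> (int q - int p) mod int (n+1) = 1 mod int (n+1)"
    using assms(1) unfolding elem_component_def by blast+
  ultimately show ?thesis by blast
qed

definition Eu :: "nat \<Rightarrow> nat \<Rightarrow> nat \<Rightarrow> 'a::field mat" where
  "Eu n p q = mat n n (\<lambda>(i,j). if i = p \<and> j = q then 1 else 0)"

lemma Eu_carrier[simp]: "Eu n p q \<in> carrier_mat n n"
  by (simp add: Eu_def)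

lemma Eu_entry: "i < n \<Longrightarrow> j < n \<Longrightarrow> Eu n p q $$ (i,j) = (if i = p \<and> j = q then 1 else 0)"
  by (simp add: Eu_def)

lemma Eu_mult:
  assumes "p < n" "q < n" "r < n"
  shows "(Eu n p q :: 'a::field mat) * Eu n q r = Eu n p r"
proof (rule eq_matI)
  fix i j assume ij: "i < dim_row (Eu n p r :: 'a mat)" "j < dim_col (Eu n p r :: 'a mat)"
  then have ij': "i < n" "j < n" by (auto simp: Eu_def)
  have "(Eu n p q * Eu n q r :: 'a mat) $$ (i,j) = (\<Sum>x\<in>{0..<n}. (Eu n p q :: 'a mat) $$ (i,x) * Eu n q r $$ (x,j))"
    using mult_entry[OF Eu_carrier Eu_carrier ij'] .
  also have "\<dots> = (\<Sum>x\<in>{0..<n}. if x = q then (if i = p \<and> j = r then 1 else 0) else (0::'a))"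
    using ij' by (intro sum.cong) (auto simp: Eu_entry)
  also have "\<dots> = (if i = p \<and> j = r then 1 else 0)" using assms by simp
  also have "\<dots> = Eu n p r $$ (i,j)" using ij' by (simp add: Eu_entry)
  finally show "(Eu n p q * Eu n q r :: 'a mat) $$ (i,j) = Eu n p r $$ (i,j)" .
qed (auto simp: Eu_def)

lemma Eu_chain:
  assumes "\<forall>j\<le>a + Suc k. P j < n"
  shows "foldr (\<lambda>A B. A * B) (map (\<lambda>j. Eu n (P j) (P (Suc j))) [a..<a + Suc k]) (1\<^sub>m n)
         = (Eu n (P a) (P (a + Suc k)) :: 'a::field mat)"
using assms proof (induction k arbitrary: a)
  case 0
  then show ?case by (simp add: Eu_def)
next
  case (Suc k)
  have u: "[a..<a + Suc (Suc k)] = a # [Suc a..<Suc a + Suc k]" by (simp add: upt_rec)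
  have IH: "foldr (\<lambda>A B. A * B) (map (\<lambda>j. Eu n (P j) (P (Suc j))) [Suc a..<Suc a + Suc k]) (1\<^sub>m n)
         = (Eu n (P (Suc a)) (P (Suc a + Suc k)) :: 'a::field mat)"
    using Suc.IH[of "Suc a"] Suc.prems by simp
  have "P a < n" "P (Suc a) < n" "P (Suc a + Suc k) < n" using Suc.prems by auto
  then show ?case unfolding u using IH
    by (simp add: Eu_mult)
qed

lemma part1:
  assumes "n \<ge> 2"
  shows "graded_monomial_identity TYPE('a::field) (n + 1) (\<lambda>i. int i) n (replicate n 1)"
  unfolding graded_monomial_identity_def
proof (intro allI impI)
  fix As :: "'a mat list"
  assume l: "length As = length (replicate n (1::int))"
    and c: "\<forall>i<length (replicate n (1::int)). As ! i \<in> elem_component TYPE('a) (n + 1) (\<lambda>i. int i) n (replicate n 1 ! i)"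
  have "\<forall>A\<in>set As. A \<in> carrier_mat n n \<and> (\<forall>p<n. \<forall>q<n. A $$ (p,q) \<noteq> (0::'a) \<longrightarrow> q = p + 1)"
  proof
    fix A assume "A \<in> set As"
    then obtain i where i: "i < length As" "A = As ! i" by (metis in_set_conv_nth)
    then have "A \<in> elem_component TYPE('a) (n + 1) (\<lambda>i. int i) n 1" using c l by simp
    then show "A \<in> carrier_mat n n \<and> (\<forall>p<n. \<forall>q<n. A $$ (p,q) \<noteq> (0::'a) \<longrightarrow> q = p + 1)"
      using deg1 assms by blast
  qed
  from superdiag[OF this] l
  have M: "foldr (\<lambda>A B. A * B) As (1\<^sub>m n) \<in> carrier_mat n n"
    "\<forall>p<n. \<forall>q<n. foldr (\<lambda>A B. A * B) As (1\<^sub>m n) $$ (p,q) \<noteq> 0 \<longrightarrow> q = p + n" by auto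
  show "foldr (\<lambda>A B. A * B) As (1\<^sub>m n) = 0\<^sub>m n n"
  proof (rule eq_matI)
    fix i j assume "i < dim_row (0\<^sub>m n n :: 'a mat)" "j < dim_col (0\<^sub>m n n :: 'a mat)"
    then have "i < n" "j < n" by auto
    then show "foldr (\<lambda>A B. A * B) As (1\<^sub>m n) $$ (i,j) = 0\<^sub>m n n $$ (i,j)"
      using M(2) by fastforce
  qed (use M(1) in auto)
qed

lemma part2:
  assumes "0 < length ds" "length ds < n"
  shows "\<not> graded_monomial_identity TYPE('a::field) (n + 1) (\<lambda>i. int i) n ds"
proof -
  define k where "k = length ds"
  define m where "m = int (n + 1)"
  have mpos: "m > 0" unfolding m_def by simp
  define S where "S j = (\<Sum>i<j. ds ! i)" for j
  define F where "F = (\<lambda>j. (int n - S j) mod m) ` {0..k}"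
  have "card F \<le> card {0..k}" unfolding F_def by (rule card_image_le) simp
  then have cF: "card F < card {0..int n}" using assms unfolding k_def by simp
  have "\<not> {0..int n} \<subseteq> F"
  proof
    assume "{0..int n} \<subseteq> F"
    then have "card {0..int n} \<le> card F" by (intro card_mono) (auto simp: F_def)
    then show False using cF by simp
  qed
  then obtain s where s: "0 \<le> s" "s \<le> int n" "s \<notin> F" by (meson atLeastAtMost_iff subsetI)
  define P where "P j = nat ((s + S j) mod m)" for j
  have Pint: "int (P j) = (s + S j) mod m" for j
    unfolding P_def using mpos by simp
  have Pn: "P j < n" if "j \<le> k" for j
  proof -
    have lt: "(s + S j) mod m < m" "0 \<le> (s + S j) mod m" using mpos by auto
    have "(s + S j) mod m \<noteq> int n"
    proof
      assume h: "(s + S j) mod m = int n"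
      have "(int n - S j) mod m = ((s + S j) mod m - S j) mod m" using h by simp
      also have "\<dots> = s mod m" by (simp add: mod_diff_left_eq)
      also have "\<dots> = s" using s mpos unfolding m_def by simp
      finally have "s = (int n - S j) mod m" by simp
      then have "s \<in> F" unfolding F_def using that by (intro rev_image_eqI[of j]) auto
      then show False using s by blast
    qed
    then have "(s + S j) mod m < int n" using lt unfolding m_def by linarith
    then show ?thesis using Pint[of j] by simp
  qed
  define As where "As = map (\<lambda>j. Eu n (P j) (P (Suc j)) :: 'a mat) [0..<k]"
  have lA: "length As = length ds" unfolding As_def k_def by simp
  have cA: "As ! i \<in> elem_component TYPE('a) (n + 1) (\<lambda>i. int i) n (ds ! i)" if i: "i < length ds" for i
  proof -
    have Ai: "As ! i = Eu n (P i) (P (Suc i))" unfolding As_def using i k_def by simp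
    have "(int (P (Suc i)) - int (P i)) mod m = ((s + S (Suc i)) mod m - (s + S i) mod m) mod m"
      by (simp add: Pint)
    also have "\<dots> = ((s + S (Suc i)) - (s + S i)) mod m" by (simp add: mod_diff_eq)
    also have "\<dots> = ds ! i mod m" by (simp add: S_def)
    finally have "(int (P (Suc i)) - int (P i)) mod m = ds ! i mod m" .
    then have md: "(int (P (Suc i)) - int (P i)) mod int (n+1) = ds ! i mod int (n+1)" unfolding m_def .
    have z: "p = P i \<and> q = P (Suc i)" if "p < n" "q < n" "(Eu n (P i) (P (Suc i)) :: 'a mat) $$ (p,q) \<noteq> 0" for p q
      using that by (simp add: Eu_entry split: if_splits)
    have "Eu n (P i) (P (Suc i)) \<in> elem_component TYPE('a) (n + 1) (\<lambda>i. int i) n (ds ! i)"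
      unfolding elem_component_def
    proof (intro CollectI conjI allI impI)
      fix p q assume "p < n" "q < n" "(Eu n (P i) (P (Suc i)) :: 'a mat) $$ (p,q) \<noteq> 0"
      then have "p = P i" "q = P (Suc i)" using z by blast+
      then show "(int q - int p) mod int (n + 1) = ds ! i mod int (n + 1)" using md by simp
    qed simp
    then show ?thesis unfolding Ai .
  qed
  obtain k' where k1: "k = 0 + Suc k'" using assms k_def by (metis add_0 gr0_implies_Suc)
  have ch: "\<forall>j\<le>0 + Suc k'. P j < n" using Pn k1 by simp
  have prod: "foldr (\<lambda>A B. A * B) As (1\<^sub>m n) = (Eu n (P 0) (P k) :: 'a mat)"
    unfolding As_def k1 by (rule Eu_chain[OF ch])
  have "P 0 < n" "P k < n" using Pn by auto
  then have "(Eu n (P 0) (P k) :: 'a mat) $$ (P 0, P k) \<noteq> 0\<^sub>m n n $$ (P 0, P k)"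
    by (simp add: Eu_entry)
  then have "foldr (\<lambda>A B. A * B) As (1\<^sub>m n) \<noteq> 0\<^sub>m n n" using prod by metis
  then show ?thesis unfolding graded_monomial_identity_def using lA cA by blast
qed

theorem mainTheorem5:
  fixes n :: nat
  assumes "n \<ge> 2"
  shows "graded_monomial_identity TYPE('a::field_char_0) (n + 1) (\<lambda>i. int i) n (replicate n 1)
       \<and> (\<forall>ds. 0 < length ds \<and> length ds < n \<longrightarrow>
             \<not> graded_monomial_identity TYPE('a) (n + 1) (\<lambda>i. int i) n ds)"
  using part1[OF assms] part2 by blast

end
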